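(* Let $M$ be an ergodic aperiodic marker process. Then for every $m\ge1$ there is a marker process $M'$ which is a finitary dilution of $M$ and has minimal gap length at least $m$.
   Context: A marker process is a non-trivial $\{0,1\}$-valued $\mathbb{Z}$-process. Aperiodic: a.s.\ there is no $p\ge1$ with $M_{n+p}=M_n$ for all $n$. A finitary dilution of $M$ is a marker process $M'$ which is a finitary factor of $M$ (shift-equivariant, with $M'_0$ a.s.\ determined by $M$ on a random finite window) such that $M'_n\le M_n$ for all $n$. The occurrences of $M$ partition $\mathbb{Z}$ into intervals, each starting at a $1$ of $M$ and ending just before the next; $I^M_0$ denotes the interval containing $0$. The minimal gap length of $M$ is the largest $m\ge1$ with $|I^M_0|\ge m$ almost surely. *)

theory Defs
  imports "HOL-Probability.Probability"
begin

text \<open>A {0,1}-valued Z-process is represented by its law: a probability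
  measure on the sequence space int => bool (True = 1) with the product
  sigma-algebra. The process M is the coordinate process.\<close>

definition seqM :: "(int \<Rightarrow> bool) measure" where
  "seqM = PiM UNIV (\<lambda>_. count_space UNIV)"

definition shift :: "(int \<Rightarrow> bool) \<Rightarrow> (int \<Rightarrow> bool)" where
  "shift x = (\<lambda>n. x (n + 1))"

definition stationary :: "(int \<Rightarrow> bool) measure \<Rightarrow> bool" where
  "stationary \<nu> \<longleftrightarrow> distr \<nu> seqM shift = \<nu>"

definition marker_process :: "(int \<Rightarrow> bool) measure \<Rightarrow> bool" where
  "marker_process \<nu> \<longleftrightarrow> prob_space \<nu> \<and> sets \<nu> = sets seqM \<and> stationary \<nu>
     \<and> \<not> (AE x in \<nu>. \<forall>n. \<not> x n)"

definition ergodic :: "(int \<Rightarrow> bool) measure \<Rightarrow> bool" where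
  "ergodic \<nu> \<longleftrightarrow> stationary \<nu> \<and>
     (\<forall>A \<in> sets seqM. shift -` A = A \<longrightarrow> measure \<nu> A = 0 \<or> measure \<nu> A = 1)"

definition aperiodic :: "(int \<Rightarrow> bool) measure \<Rightarrow> bool" where
  "aperiodic \<nu> \<longleftrightarrow> (AE x in \<nu>. \<not> (\<exists>p::int. p \<ge> 1 \<and> (\<forall>n. x (n + p) = x n)))"

definition finitary_dilution ::
  "(int \<Rightarrow> bool) measure \<Rightarrow> ((int \<Rightarrow> bool) \<Rightarrow> (int \<Rightarrow> bool)) \<Rightarrow> bool" where
  "finitary_dilution \<mu> \<phi> \<longleftrightarrow>
     \<phi> \<in> seqM \<rightarrow>\<^sub>M seqM \<and>
     (AE x in \<mu>. \<phi> (shift x) = shift (\<phi> x)) \<and>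
     (\<exists>X0 \<in> sets seqM. measure \<mu> X0 = 1 \<and>
        (\<forall>x \<in> X0. \<exists>N::nat. \<forall>y \<in> X0.
            (\<forall>k::int. \<bar>k\<bar> \<le> int N \<longrightarrow> y k = x k) \<longrightarrow> \<phi> y 0 = \<phi> x 0)) \<and>
     (AE x in \<mu>. \<forall>n. \<phi> x n \<longrightarrow> x n) \<and>
     marker_process (distr \<mu> seqM \<phi>)"

text \<open>The interval I_0 of the partition induced by the ones of x that contains 0
  (empty if there is no 1 at or before 0 or no 1 after 0).\<close>
definition interval0 :: "(int \<Rightarrow> bool) \<Rightarrow> int set" where
  "interval0 x = {n. \<exists>a b. a \<le> 0 \<and> 0 < b \<and> x a \<and> x b \<and> (\<forall>k. a < k \<and> k < b \<longrightarrow> \<not> x k)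
                       \<and> a \<le> n \<and> n < b}"

definition min_gap_length :: "(int \<Rightarrow> bool) measure \<Rightarrow> nat" where
  "min_gap_length \<nu> = (GREATEST m. m \<ge> 1 \<and> (AE x in \<nu>. m \<le> card (interval0 x)))"

end

theory Submission imports Defs begin

lemma space_seqM[simp]: "space seqM = UNIV"
  by (simp add: seqM_def space_PiM)

lemma coord_meas[measurable]: "(\<lambda>x. x n) \<in> seqM \<rightarrow>\<^sub>M count_space UNIV"
  unfolding seqM_def by (rule measurable_component_singleton) simp

lemma shift_meas[measurable]: "shift \<in> seqM \<rightarrow>\<^sub>M seqM"
  unfolding shift_def seqM_def
  by (rule measurable_PiM_single') (auto simp: space_PiM seqM_def[symmetric])

lemma stat_emeasure:
  assumes "stationary \<nu>" "sets \<nu> = sets seqM" "A \<in> sets seqM"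
  shows "emeasure \<nu> (shift -` A) = emeasure \<nu> A"
proof -
  have sp: "space \<nu> = UNIV" using sets_eq_imp_space_eq[OF assms(2)] by simp
  have m: "shift \<in> \<nu> \<rightarrow>\<^sub>M seqM" using measurable_cong_sets[OF assms(2) refl] shift_meas by blast
  have "emeasure \<nu> A = emeasure (distr \<nu> seqM shift) A" using assms(1) unfolding stationary_def by simp
  also have "\<dots> = emeasure \<nu> (shift -` A)" using emeasure_distr[OF m assms(3)] sp by simp
  finally show ?thesis by simp
qed

lemma stat_measure:
  assumes "stationary \<nu>" "sets \<nu> = sets seqM" "A \<in> sets seqM"
  shows "measure \<nu> (shift -` A) = measure \<nu> A"
  using stat_emeasure[OF assms] by (simp add: measure_def)

lemma const_int:
  fixes f :: "int \<Rightarrow> real"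
  assumes "\<And>n. f (n+1) = f n"
  shows "f n = f 0"
proof (induct n rule: int_induct[where k=0])
  case base then show ?case by simp
next
  case (step1 i) then show ?case using assms[of i] by simp
next
  case (step2 i) then show ?case using assms[of "i-1"] by simp
qed

lemma pred_ex_le[measurable]: "Measurable.pred seqM (\<lambda>y. \<exists>a\<le>n. y a)"
  by measurable
lemma pred_ex_gt[measurable]: "Measurable.pred seqM (\<lambda>y. \<exists>a>n. y a)"
  by measurable
lemma pred_ex[measurable]: "Measurable.pred seqM (\<lambda>y. \<exists>a. y a)"
  by measurable

lemma recur:
  assumes P: "prob_space \<nu>" and S: "sets \<nu> = sets seqM" and st: "stationary \<nu>"
    and ex: "AE y in \<nu>. \<exists>a. y a"
  shows "AE y in \<nu>. (\<exists>a\<le>0. y a) \<and> (\<exists>b>0. y b)"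
proof -
  interpret prob_space \<nu> by fact
  have sp: "space \<nu> = UNIV" using sets_eq_imp_space_eq[OF S] by simp
  define SL where "SL n = {y. \<exists>a\<le>n. y (a::int)}" for n
  define TR where "TR n = {y. \<exists>b>n. y (b::int)}" for n
  have SLs: "SL n \<in> sets \<nu>" for n using predE[OF pred_ex_le[of n]] unfolding SL_def S by simp
  have TRs: "TR n \<in> sets \<nu>" for n using predE[OF pred_ex_gt[of n]] unfolding TR_def S by simp
  have "shift -` SL n = SL (n+1)" for n
    unfolding SL_def shift_def
    apply (auto)
    subgoal for y a by (rule exI[of _ "a+1"]) simp
    subgoal for y a by (rule exI[of _ "a-1"]) simp
    done
  then have e1: "measure \<nu> (SL (n+1)) = measure \<nu> (SL n)" for n
    using stat_measure[OF st S, of "SL n"] SLs S by metis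
  have cSL: "measure \<nu> (SL n) = measure \<nu> (SL 0)" for n
    by (rule const_int[of "\<lambda>n. measure \<nu> (SL n)", OF e1])
  have "shift -` TR n = TR (n+1)" for n
    unfolding TR_def shift_def
    apply (auto)
    subgoal for y a by (rule exI[of _ "a+1"]) simp
    subgoal for y a by (rule exI[of _ "a-1"]) simp
    done
  then have e2: "measure \<nu> (TR (n+1)) = measure \<nu> (TR n)" for n
    using stat_measure[OF st S, of "TR n"] TRs S by metis
  have cTR: "measure \<nu> (TR n) = measure \<nu> (TR 0)" for n
    by (rule const_int[of "\<lambda>n. measure \<nu> (TR n)", OF e2])
  have aSL: "AE y in \<nu>. y \<in> SL (int k) \<longrightarrow> y \<in> SL 0" for k
  proof -
    have sub: "SL 0 \<subseteq> SL (int k)" unfolding SL_def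
    proof safe
      fix y a assume "a \<le> (0::int)" "y a" then show "\<exists>a\<le>int k. y a" by (intro exI[of _ a]) simp
    qed
    have "measure \<nu> (SL (int k) - SL 0) = 0"
      using finite_measure_Diff[OF SLs SLs sub] cSL[of "int k"] by simp
    then have "SL (int k) - SL 0 \<in> null_sets \<nu>"
      using SLs by (simp add: null_sets_def emeasure_eq_measure)
    from AE_not_in[OF this] show ?thesis by auto
  qed
  have aTR: "AE y in \<nu>. y \<in> TR (- int k) \<longrightarrow> y \<in> TR 0" for k
  proof -
    have sub: "TR 0 \<subseteq> TR (- int k)" unfolding TR_def
    proof safe
      fix y a assume "(0::int) < a" "y a" then show "\<exists>b> - int k. y b" by (intro exI[of _ a]) simp
    qed
    have "measure \<nu> (TR (- int k) - TR 0) = 0"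
      using finite_measure_Diff[OF TRs TRs sub] cTR[of "- int k"] by simp
    then have "TR (- int k) - TR 0 \<in> null_sets \<nu>"
      using TRs by (simp add: null_sets_def emeasure_eq_measure)
    from AE_not_in[OF this] show ?thesis by auto
  qed
  have "AE y in \<nu>. (\<forall>k. y \<in> SL (int k) \<longrightarrow> y \<in> SL 0) \<and> (\<forall>k. y \<in> TR (- int k) \<longrightarrow> y \<in> TR 0)"
  proof -
    have "AE y in \<nu>. \<forall>k. y \<in> SL (int k) \<longrightarrow> y \<in> SL 0" using aSL by (subst AE_all_countable) blast
    moreover have "AE y in \<nu>. \<forall>k. y \<in> TR (- int k) \<longrightarrow> y \<in> TR 0" using aTR by (subst AE_all_countable) blast
    ultimately show ?thesis by eventually_elim blast
  qed
  then show ?thesis using ex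
  proof eventually_elim
    case (elim y)
    then obtain a where a: "y a" by auto
    have "y \<in> SL (int (nat a))" using a unfolding SL_def by (intro CollectI exI[of _ a]) auto
    then have 1: "y \<in> SL 0" using elim by blast
    have "y \<in> TR (- int (nat (1 - a)))" using a unfolding TR_def by (intro CollectI exI[of _ a]) auto
    then have 2: "y \<in> TR 0" using elim by blast
    show ?case using 1 2 unfolding SL_def TR_def by auto
  qed
qed

lemma interval_card:
  fixes y :: "int \<Rightarrow> bool"
  assumes gap: "\<And>a b. y a \<Longrightarrow> y b \<Longrightarrow> a < b \<Longrightarrow> int m \<le> b - a"
    and ea: "\<exists>a\<le>0. y a" and eb: "\<exists>b>0. y b"
  shows "m \<le> card (interval0 y)"
proof -
  from ea obtain a1 where a1: "a1 \<le> 0" "y a1" by auto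
  from eb obtain b1 where b1: "b1 > 0" "y b1" by auto
  have exa: "\<exists>k::nat. y (- int k)" using a1 by (intro exI[of _ "nat (- a1)"]) simp
  have exb: "\<exists>k::nat. k > 0 \<and> y (int k)" using b1 by (intro exI[of _ "nat b1"]) simp
  define ka where "ka = (LEAST k::nat. y (- int k))"
  define kb where "kb = (LEAST k::nat. k > 0 \<and> y (int k))"
  define a where "a = - int ka"
  define b where "b = int kb"
  have ya: "y a" unfolding a_def ka_def using LeastI_ex[OF exa] .
  have hb: "kb > 0 \<and> y (int kb)" unfolding kb_def using LeastI_ex[OF exb] .
  then have yb: "y b" and b0: "b > 0" unfolding b_def by auto
  have a0: "a \<le> 0" unfolding a_def by simp
  have between: "\<not> y k" if "a < k" "k < b" for k
  proof (cases "k \<le> 0")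
    case True
    have "nat (-k) < ka" using that(1) True unfolding a_def by simp
    then have "\<not> y (- int (nat (-k)))" unfolding ka_def by (rule not_less_Least)
    then show ?thesis using True by simp
  next
    case False
    have "nat k < kb" using that(2) False unfolding b_def by simp
    then have "\<not> (nat k > 0 \<and> y (int (nat k)))" unfolding kb_def by (rule not_less_Least)
    then show ?thesis using False by simp
  qed
  have eq: "interval0 y = {a..<b}"
  proof
    show "{a..<b} \<subseteq> interval0 y"
    proof
      fix n assume "n \<in> {a..<b}"
      then have "a \<le> 0 \<and> 0 < b \<and> y a \<and> y b \<and> (\<forall>k. a < k \<and> k < b \<longrightarrow> \<not> y k) \<and> a \<le> n \<and> n < b"
        using a0 b0 ya yb between by auto
      then show "n \<in> interval0 y" unfolding interval0_def by (intro CollectI exI)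
    qed
    show "interval0 y \<subseteq> {a..<b}"
    proof
      fix n assume "n \<in> interval0 y"
      then obtain a' b' where "a' \<le> 0 \<and> 0 < b' \<and> y a' \<and> y b' \<and> (\<forall>k. a' < k \<and> k < b' \<longrightarrow> \<not> y k) \<and> a' \<le> n \<and> n < b'"
        unfolding interval0_def by (elim CollectE exE)
      then have h: "a' \<le> 0" "0 < b'" "y a'" "y b'"
        "\<And>k. a' < k \<Longrightarrow> k < b' \<Longrightarrow> \<not> y k" "a' \<le> n" "n < b'" by auto
      have "a = a'"
      proof (rule ccontr)
        assume "a \<noteq> a'"
        then have "a < a' \<or> a' < a" by auto
        then show False
        proof
          assume "a < a'" then show False using between[of a'] h(1,3) b0 by auto
        next
          assume "a' < a" then show False using h(5)[of a] a0 h(2) ya by auto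
        qed
      qed
      moreover have "b = b'"
      proof (rule ccontr)
        assume "b \<noteq> b'"
        then have "b < b' \<or> b' < b" by auto
        then show False
        proof
          assume "b < b'" then show False using h(5)[of b] h(1) b0 yb by auto
        next
          assume "b' < b" then show False using between[of b'] h(2,4) a0 by auto
        qed
      qed
      ultimately show "n \<in> {a..<b}" using h by auto
    qed
  qed
  have "int m \<le> b - a" using gap[OF ya yb] a0 b0 by auto
  then show ?thesis unfolding eq by simp
qed

definition Qp :: "(int \<Rightarrow> bool) \<Rightarrow> int \<Rightarrow> nat \<Rightarrow> bool" where
  "Qp x p L \<longleftrightarrow> (\<forall>i. \<bar>i\<bar> \<le> int L \<longrightarrow> \<bar>i+p\<bar> \<le> int L \<longrightarrow> x (i+p) = x i)"

definition Per :: "nat \<Rightarrow> nat \<Rightarrow> (int \<Rightarrow> bool) \<Rightarrow> bool" where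
  "Per m L x \<longleftrightarrow> (\<exists>p::int. 1 \<le> p \<and> p < int m \<and> Qp x p L)"

lemma Qp_mono: "Qp x p L \<Longrightarrow> L' \<le> L \<Longrightarrow> Qp x p L'"
  unfolding Qp_def by force

lemma per_lemma:
  assumes "\<forall>L. Per m L x"
  shows "\<exists>p::int. p \<ge> 1 \<and> (\<forall>n. x (n + p) = x n)"
proof -
  have "\<exists>p. 1 \<le> p \<and> p < int m \<and> (\<forall>L. Qp x p L)"
  proof (rule ccontr)
    assume "\<not> ?thesis"
    then have "\<forall>p\<in>{1..<int m}. \<exists>L. \<not> Qp x p L" by auto
    then obtain f where f: "\<And>p. p \<in> {1..<int m} \<Longrightarrow> \<not> Qp x p (f p)" by metis
    define L where "L = (\<Sum>p\<in>{1..<int m}. f p)"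
    have "f p \<le> L" if "p \<in> {1..<int m}" for p
      unfolding L_def by (rule member_le_sum) (use that in auto)
    then have "\<not> Qp x p L" if "p \<in> {1..<int m}" for p
      using f[OF that] Qp_mono that by blast
    moreover have "Per m L x" using assms by blast
    ultimately show False unfolding Per_def by auto
  qed
  then obtain p where p: "1 \<le> p" "\<forall>L. Qp x p L" by auto
  have "x (n + p) = x n" for n
    using p(2)[rule_format, of "nat (\<bar>n\<bar> + \<bar>p\<bar>)"] unfolding Qp_def
    by (auto elim!: allE[of _ n])
  then show ?thesis using p(1) by auto
qed

lemma stat_coord:
  assumes P: "prob_space \<nu>" and S: "sets \<nu> = sets seqM" and st: "stationary \<nu>"
  shows "measure \<nu> {x. x n} = measure \<nu> {x. x 0}"
proof -
  have pr: "{x. x n} \<in> sets seqM" for n using predE[OF coord_meas[of n]] by simp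
  have "measure \<nu> {x. x (n+1)} = measure \<nu> {x. x n}" for n
  proof -
    have "shift -` {x. x n} = {x. x (n+1)}" unfolding shift_def by auto
    then show ?thesis using stat_measure[OF st S pr[of n]] by simp
  qed
  then show ?thesis using const_int[of "\<lambda>n. measure \<nu> {x. x n}"] by blast
qed

lemma exists_L:
  assumes mp: "marker_process \<mu>" and ap: "aperiodic \<mu>"
  shows "\<exists>L. measure \<mu> {x. x 0 \<and> \<not> Per m L x} \<noteq> 0"
proof (rule ccontr)
  assume "\<not> ?thesis"
  then have z: "measure \<mu> {x. x 0 \<and> \<not> Per m L x} = 0" for L by auto
  have P: "prob_space \<mu>" and S: "sets \<mu> = sets seqM" and st: "stationary \<mu>"
    and nt: "\<not> (AE x in \<mu>. \<forall>n. \<not> x n)" using mp unfolding marker_process_def by auto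
  interpret prob_space \<mu> by fact
  have PerM: "Measurable.pred seqM (Per m L)" for L unfolding Per_def Qp_def by measurable
  have Bs: "{x. x 0 \<and> \<not> Per m L x} \<in> sets \<mu>" for L
  proof -
    have "Measurable.pred seqM (\<lambda>x. x 0 \<and> \<not> Per m L x)" using PerM[of L] by measurable
    from predE[OF this] show ?thesis unfolding S by simp
  qed
  have "AE x in \<mu>. x \<notin> {x. x 0 \<and> \<not> Per m L x}" for L
  proof -
    have "{x. x 0 \<and> \<not> Per m L x} \<in> null_sets \<mu>" using z[of L] Bs[of L] by (simp add: null_sets_def emeasure_eq_measure)
    from AE_not_in[OF this] show ?thesis .
  qed
  then have "AE x in \<mu>. \<forall>L. x 0 \<longrightarrow> Per m L x" by (subst AE_all_countable) auto
  then have a0: "AE x in \<mu>. \<not> x 0" using ap unfolding aperiodic_def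
  proof eventually_elim
    case (elim x)
    then show ?case using per_lemma[of m x] by auto
  qed
  have cs: "{x. x n} \<in> sets \<mu>" for n using predE[OF coord_meas[of n]] S by simp
  have "measure \<mu> {x. x 0} = 0"
    using a0 cs[of 0] AE_iff_null_sets[of "{x. x 0}" \<mu>] by (simp add: null_sets_def emeasure_eq_measure)
  then have "measure \<mu> {x. x n} = 0" for n using stat_coord[OF P S st] by simp
  then have "AE x in \<mu>. x \<notin> {x. x n}" if "measure \<mu> {x. x n} = 0" for n
  proof -
    have "{x. x n} \<in> null_sets \<mu>" using that cs[of n] by (simp add: null_sets_def emeasure_eq_measure)
    from AE_not_in[OF this] show ?thesis .
  qed
  then have "AE x in \<mu>. \<forall>n. \<not> x n" using \<open>\<And>n. measure \<mu> {x. x n} = 0\<close> by (subst AE_all_countable) auto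
  then show False using nt by simp
qed

definition cyl :: "nat \<Rightarrow> (int \<Rightarrow> bool) \<Rightarrow> (int \<Rightarrow> bool) set" where
  "cyl L w = {x. \<forall>k. \<bar>k\<bar> \<le> int L \<longrightarrow> x k = w k}"

definition restr :: "nat \<Rightarrow> (int \<Rightarrow> bool) \<Rightarrow> (int \<Rightarrow> bool)" where
  "restr L x = (\<lambda>k. \<bar>k\<bar> \<le> int L \<and> x k)"

lemma cyl_restr: "cyl L (restr L x) = cyl L x"
  unfolding cyl_def restr_def by auto

lemma cyl_meas: "cyl L w \<in> sets seqM"
proof -
  have "Measurable.pred seqM (\<lambda>x. \<forall>k. \<bar>k\<bar> \<le> int L \<longrightarrow> x k = w k)" by measurable
  from predE[OF this] show ?thesis unfolding cyl_def by simp
qed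

lemma pick_cyl:
  assumes P: "prob_space \<mu>" and S: "sets \<mu> = sets seqM"
    and B: "B \<in> sets \<mu>" "measure \<mu> B \<noteq> 0"
  shows "\<exists>x0\<in>B. measure \<mu> (cyl L x0) \<noteq> 0"
proof (rule ccontr)
  assume "\<not> ?thesis"
  then have z: "measure \<mu> (cyl L x0) = 0" if "x0 \<in> B" for x0 using that by auto
  interpret prob_space \<mu> by fact
  define W where "W = restr L ` B"
  have "W \<subseteq> (\<lambda>S k. k \<in> S) ` Pow {- int L..int L}"
  proof
    fix w assume "w \<in> W"
    then obtain x where "x \<in> B" "w = restr L x" unfolding W_def by auto
    then have "w = (\<lambda>k. k \<in> {k \<in> {- int L..int L}. x k})" unfolding restr_def by auto
    then show "w \<in> (\<lambda>S k. k \<in> S) ` Pow {- int L..int L}" by blast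
  qed
  then have fW: "finite W" by (rule finite_subset) simp
  have sub: "B \<subseteq> (\<Union>w\<in>W. cyl L w)"
  proof
    fix x assume "x \<in> B"
    then have "restr L x \<in> W" "x \<in> cyl L (restr L x)" unfolding W_def cyl_restr by (auto simp: cyl_def)
    then show "x \<in> (\<Union>w\<in>W. cyl L w)" by blast
  qed
  have ev: "cyl L ` W \<subseteq> events" using cyl_meas S by auto
  have "measure \<mu> B \<le> measure \<mu> (\<Union>w\<in>W. cyl L w)"
    by (rule finite_measure_mono[OF sub]) (use ev fW in auto)
  also have "\<dots> \<le> (\<Sum>w\<in>W. measure \<mu> (cyl L w))"
    by (rule finite_measure_subadditive_finite[OF fW ev])
  also have "\<dots> = 0"
  proof (rule sum.neutral, rule ballI)
    fix w assume "w \<in> W"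
    then obtain x where "x \<in> B" "w = restr L x" unfolding W_def by auto
    then show "measure \<mu> (cyl L w) = 0" using z cyl_restr by simp
  qed
  finally show False using B(2) measure_nonneg[of \<mu> B] by linarith
qed


definition phi :: "nat \<Rightarrow> (int \<Rightarrow> bool) \<Rightarrow> (int \<Rightarrow> bool) \<Rightarrow> (int \<Rightarrow> bool)" where
  "phi L x0 x = (\<lambda>n. \<forall>k. \<bar>k\<bar> \<le> int L \<longrightarrow> x (n+k) = x0 k)"

lemma phi_meas[measurable]: "phi L x0 \<in> seqM \<rightarrow>\<^sub>M seqM"
proof -
  have "(\<lambda>x n. phi L x0 x n) \<in> seqM \<rightarrow>\<^sub>M seqM"
    unfolding seqM_def
  proof (rule measurable_PiM_single')
    fix n :: int
    show "(\<lambda>x. phi L x0 x n) \<in> PiM UNIV (\<lambda>_. count_space UNIV) \<rightarrow>\<^sub>M count_space UNIV"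
      unfolding phi_def seqM_def[symmetric] by measurable
  qed (auto simp: space_PiM)
  then show ?thesis by simp
qed

lemma phi_shift: "phi L x0 (shift x) = shift (phi L x0 x)"
  unfolding phi_def shift_def by (auto simp: algebra_simps)

lemma phi_le: "x0 0 \<Longrightarrow> phi L x0 x n \<Longrightarrow> x n"
  unfolding phi_def by (metis abs_zero add.right_neutral of_nat_0_le_iff)

lemma phi_gap:
  assumes np: "\<not> Per m L x0" and a: "phi L x0 x a" and b: "phi L x0 x b" and ab: "a < b"
  shows "int m \<le> b - a"
proof (rule ccontr)
  assume "\<not> ?thesis"
  then have "1 \<le> b - a" "b - a < int m" using ab by auto
  then have "\<not> Qp x0 (b - a) L" using np unfolding Per_def by auto
  then obtain i where i: "\<bar>i\<bar> \<le> int L" "\<bar>i + (b-a)\<bar> \<le> int L" "x0 (i + (b-a)) \<noteq> x0 i"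
    unfolding Qp_def by auto
  have "x (b + i) = x0 i" using b i(1) unfolding phi_def by auto
  moreover have "x (a + (i + (b-a))) = x0 (i + (b-a))" using a i(2) unfolding phi_def by blast
  ultimately show False using i(3) by (simp add: algebra_simps)
qed

lemma phi0: "phi L x0 x 0 \<longleftrightarrow> x \<in> cyl L x0"
  unfolding phi_def cyl_def by simp


theorem lemma3p11:
  fixes \<mu> :: "(int \<Rightarrow> bool) measure" and m :: nat
  assumes "marker_process \<mu>" and "ergodic \<mu>" and "aperiodic \<mu>" and "m \<ge> 1"
  shows "\<exists>\<phi>. finitary_dilution \<mu> \<phi> \<and> m \<le> min_gap_length (distr \<mu> seqM \<phi>)"
proof -
  have P: "prob_space \<mu>" and S: "sets \<mu> = sets seqM" and st: "stationary \<mu>"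
    using assms(1) unfolding marker_process_def by auto
  interpret prob_space \<mu> by fact
  have sp: "space \<mu> = UNIV" using sets_eq_imp_space_eq[OF S] by simp
  obtain L where L: "measure \<mu> {x. x 0 \<and> \<not> Per m L x} \<noteq> 0"
    using exists_L[OF assms(1,3)] by blast
  have PerM: "Measurable.pred seqM (Per m L)" unfolding Per_def Qp_def by measurable
  have Bs: "{x. x 0 \<and> \<not> Per m L x} \<in> sets \<mu>"
  proof -
    have "Measurable.pred seqM (\<lambda>x. x 0 \<and> \<not> Per m L x)" using PerM by measurable
    from predE[OF this] show ?thesis unfolding S by simp
  qed
  obtain x0 where x0: "x0 0" "\<not> Per m L x0" and cy: "measure \<mu> (cyl L x0) \<noteq> 0"
    using pick_cyl[OF P S Bs L, of L] by auto
  define \<phi> where "\<phi> = phi L x0"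
  define \<nu> where "\<nu> = distr \<mu> seqM \<phi>"
  have pm: "\<phi> \<in> \<mu> \<rightarrow>\<^sub>M seqM" unfolding \<phi>_def using measurable_cong_sets[OF S refl] phi_meas by blast
  have pn: "prob_space \<nu>" unfolding \<nu>_def by (rule prob_space_distr[OF pm])
  have Sn: "sets \<nu> = sets seqM" unfolding \<nu>_def by simp
  have stn: "stationary \<nu>"
  proof -
    have "distr \<nu> seqM shift = distr \<mu> seqM (shift \<circ> \<phi>)"
      unfolding \<nu>_def by (rule distr_distr[OF shift_meas pm])
    also have "shift \<circ> \<phi> = \<phi> \<circ> shift" unfolding \<phi>_def by (auto simp: phi_shift)
    also have "distr \<mu> seqM (\<phi> \<circ> shift) = distr (distr \<mu> seqM shift) seqM \<phi>"
    proof (rule distr_distr[symmetric])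
      show "\<phi> \<in> seqM \<rightarrow>\<^sub>M seqM" unfolding \<phi>_def by (rule phi_meas)
      show "shift \<in> \<mu> \<rightarrow>\<^sub>M seqM" using measurable_cong_sets[OF S refl] shift_meas by blast
    qed
    also have "distr \<mu> seqM shift = \<mu>" using st unfolding stationary_def by simp
    finally show ?thesis unfolding stationary_def \<nu>_def by simp
  qed
  have AEn: "(AE y in \<nu>. Q y) \<longleftrightarrow> (AE x in \<mu>. Q (\<phi> x))" if "Measurable.pred seqM Q" for Q
    unfolding \<nu>_def using AE_distr_iff[OF pm, of Q] predE[OF that] by simp
  have ntn: "\<not> (AE y in \<nu>. \<forall>n. \<not> y n)"
  proof
    assume "AE y in \<nu>. \<forall>n. \<not> y n"
    then have "AE x in \<mu>. \<forall>n. \<not> \<phi> x n" by (subst AEn[symmetric]) measurable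
    then have "AE x in \<mu>. x \<notin> cyl L x0" by eventually_elim (auto simp: \<phi>_def phi0[symmetric])
    then have "cyl L x0 \<in> null_sets \<mu>" using AE_iff_null_sets[of "cyl L x0" \<mu>] cyl_meas S by simp
    then show False using cy by (simp add: measure_eq_0_null_sets)
  qed
  have mpn: "marker_process \<nu>" unfolding marker_process_def using pn Sn stn ntn by auto
  have fd: "finitary_dilution \<mu> \<phi>"
    unfolding finitary_dilution_def
  proof (intro conjI)
    show "\<phi> \<in> seqM \<rightarrow>\<^sub>M seqM" unfolding \<phi>_def by (rule phi_meas)
    show "AE x in \<mu>. \<phi> (shift x) = shift (\<phi> x)" unfolding \<phi>_def by (simp add: phi_shift)
    show "\<exists>X0\<in>sets seqM. measure \<mu> X0 = 1 \<and> (\<forall>x\<in>X0. \<exists>N. \<forall>y\<in>X0.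
            (\<forall>k. \<bar>k\<bar> \<le> int N \<longrightarrow> y k = x k) \<longrightarrow> \<phi> y 0 = \<phi> x 0)"
    proof (intro bexI[of _ UNIV] conjI ballI)
      show "measure \<mu> UNIV = 1" using prob_space sp by simp
      show "UNIV \<in> sets seqM" using sets.top[of seqM] by simp
      fix x show "\<exists>N. \<forall>y\<in>UNIV. (\<forall>k. \<bar>k\<bar> \<le> int N \<longrightarrow> y k = x k) \<longrightarrow> \<phi> y 0 = \<phi> x 0"
        by (rule exI[of _ L]) (auto simp: \<phi>_def phi_def)
    qed
    show "AE x in \<mu>. \<forall>n. \<phi> x n \<longrightarrow> x n" using phi_le[of x0 L, OF x0(1)] unfolding \<phi>_def by auto
    show "marker_process (distr \<mu> seqM \<phi>)" using mpn unfolding \<nu>_def .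
  qed
  \<comment> \<open>ergodicity gives ones a.s.\<close>
  have exn: "AE y in \<nu>. \<exists>a. y a"
  proof -
    define A where "A = {x. \<exists>a. \<phi> x a}"
    have As: "A \<in> sets seqM"
    proof -
      have "Measurable.pred seqM (\<lambda>x. \<exists>a. \<phi> x a)" unfolding \<phi>_def by measurable
      from predE[OF this] show ?thesis unfolding A_def by simp
    qed
    have "shift -` A = A"
    proof -
      have "(\<exists>a. \<phi> (shift x) a) \<longleftrightarrow> (\<exists>a. \<phi> x a)" for x
      proof
        assume "\<exists>a. \<phi> (shift x) a"
        then obtain a where "\<phi> (shift x) a" by blast
        then have "\<phi> x (a+1)" unfolding \<phi>_def phi_shift by (simp add: shift_def)
        then show "\<exists>a. \<phi> x a" by blast
      next
        assume "\<exists>a. \<phi> x a"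
        then obtain a where "\<phi> x a" by blast
        then have "\<phi> (shift x) (a-1)" unfolding \<phi>_def phi_shift by (simp add: shift_def)
        then show "\<exists>a. \<phi> (shift x) a" by blast
      qed
      then show ?thesis unfolding A_def by auto
    qed
    then have "measure \<mu> A = 0 \<or> measure \<mu> A = 1" using assms(2) As unfolding ergodic_def by auto
    moreover have "measure \<mu> A \<noteq> 0"
    proof
      assume "measure \<mu> A = 0"
      then have "A \<in> null_sets \<mu>" using As S by (simp add: null_sets_def emeasure_eq_measure)
      from AE_not_in[OF this] have "AE x in \<mu>. \<forall>n. \<not> \<phi> x n" unfolding A_def by simp
      then have "AE y in \<nu>. \<forall>n. \<not> y n" by (subst AEn) measurable
      then show False using ntn by simp
    qed
    ultimately have "measure \<mu> A = 1" by simp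
    from AE_prob_1[OF this] have "AE x in \<mu>. \<exists>a. \<phi> x a" unfolding A_def by simp
    then show ?thesis by (subst AEn) measurable
  qed
  have rec: "AE y in \<nu>. (\<exists>a\<le>0. y a) \<and> (\<exists>b>0. y b)" by (rule recur[OF pn Sn stn exn])
  have gapn: "AE y in \<nu>. \<forall>a b. y a \<longrightarrow> y b \<longrightarrow> a < b \<longrightarrow> int m \<le> b - a"
  proof (subst AEn)
    show "Measurable.pred seqM (\<lambda>y. \<forall>a b. y a \<longrightarrow> y b \<longrightarrow> a < b \<longrightarrow> int m \<le> b - a)" by measurable
    show "AE x in \<mu>. \<forall>a b. \<phi> x a \<longrightarrow> \<phi> x b \<longrightarrow> a < b \<longrightarrow> int m \<le> b - a"
      using phi_gap[OF x0(2)] unfolding \<phi>_def by auto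
  qed
  define Pm where "Pm = (\<lambda>m'::nat. m' \<ge> 1 \<and> (AE y in \<nu>. m' \<le> card (interval0 y)))"
  have Pmm: "Pm m" unfolding Pm_def using assms(4)
  proof (intro conjI)
    show "AE y in \<nu>. m \<le> card (interval0 y)" using rec gapn
    proof eventually_elim
      case (elim y)
      show ?case by (rule interval_card[of y m]) (use elim in auto)
    qed
  qed simp
  have bnd: "\<exists>b. \<forall>y. Pm y \<longrightarrow> y \<le> b"
  proof (rule ccontr)
    assume "\<not> ?thesis"
    then have "\<forall>b. \<exists>y. Pm y \<and> b < y" by (auto simp: not_le)
    then have "AE z in \<nu>. b \<le> card (interval0 z)" for b
    proof -
      obtain y where "Pm y" "b < y" using \<open>\<forall>b. \<exists>y. Pm y \<and> b < y\<close> by blast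
      then have "AE z in \<nu>. y \<le> card (interval0 z)" unfolding Pm_def by blast
      then show ?thesis
        by (rule AE_mp) (rule AE_I2, use \<open>b < y\<close> in auto)
    qed
    then have "AE z in \<nu>. \<forall>b. b \<le> card (interval0 z)" by (subst AE_all_countable) auto
    then have "AE z in \<nu>. False" proof eventually_elim
      case (elim z) then show False using Suc_n_not_le_n[of "card (interval0 z)"] by blast
    qed
    then show False using prob_space.AE_False[OF pn] by simp
  qed
  then obtain b where "\<And>y. Pm y \<Longrightarrow> y \<le> b" by blast
  then have "m \<le> Greatest Pm" by (rule Greatest_le_nat[of Pm m, OF Pmm])
  then have "m \<le> min_gap_length \<nu>" unfolding min_gap_length_def Pm_def by simp
  then show ?thesis using fd unfolding \<nu>_def by blast
qed
end
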